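(* Let $T=(\mathcal V,E,r)$ be a tree whose vertices are distinct points of a metric space $(X,d)$, and give each edge $e=(v,v')$ length $L_e=d(v,v')$. Sort the edges as $e_1,\dots,e_{|\mathcal V|-1}$ in nondecreasing order of length, and assign ranks: $e_1$ has rank 1, and for $t\ge2$, $e_t$ has the rank of $e_{t-1}$ if $L_{e_t}\le2\sum_{s=1}^{t-1}L_{e_s}$, and the rank of $e_{t-1}$ plus 1 otherwise. Then for any two edges $e,e'$ of the same rank, $L_e/L_{e'}\le3^{|\mathcal V|-1}$. *)

theory Defs
  imports Complex_Main
begin

definition is_rooted_tree :: "'a set \<Rightarrow> ('a \<times> 'a) set \<Rightarrow> 'a \<Rightarrow> bool" where
  "is_rooted_tree V E r \<longleftrightarrow>
     finite V \<and> r \<in> V \<and> E \<subseteq> V \<times> V \<and>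
     (\<forall>u. (u, r) \<notin> E) \<and>
     (\<forall>v\<in>V - {r}. \<exists>!u. (u, v) \<in> E) \<and>
     (\<forall>v\<in>V. (r, v) \<in> E\<^sup>*)"

definition edge_len :: "('a::metric_space \<times> 'a) \<Rightarrow> real" where
  "edge_len e = dist (fst e) (snd e)"

text \<open>Ranks along a list of lengths (0-indexed position t corresponds to edge e_(t+1)):
  the first edge has rank 1; edge t+1 keeps the rank of edge t if its length is at most
  twice the sum of all previous lengths, otherwise the rank increases by 1.\<close>
fun rank :: "real list \<Rightarrow> nat \<Rightarrow> nat" where
  "rank Ls 0 = 1"
| "rank Ls (Suc t) =
     (if Ls ! Suc t \<le> 2 * sum_list (take (Suc t) Ls) then rank Ls t else rank Ls t + 1)"

end

theory Submission
  imports Defs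
begin

lemma rank_mono': "a \<le> b \<Longrightarrow> rank Ls a \<le> rank Ls b"
proof (induction b)
  case 0 then show ?case by simp
next
  case (Suc b) then show ?case by (cases "a = Suc b") (auto simp: le_Suc_eq)
qed

lemma S_Suc: "Suc t < length Ls \<Longrightarrow>
  sum_list (take (Suc (Suc t)) Ls) = sum_list (take (Suc t) Ls) + Ls ! Suc t"
  by (simp add: take_Suc_conv_app_nth algebra_simps)

lemma suc_le_pow3: "Suc j \<le> (3::nat) ^ j"
proof (induction j)
  case 0 then show ?case by simp
next
  case (Suc j) then show ?case by simp
qed

lemma key:
  fixes Ls :: "real list"
  assumes srt: "sorted Ls" and nn: "\<forall>x\<in>set Ls. 0 \<le> x" and ji: "j \<le> i"
    and il: "i < length Ls" and rk: "rank Ls i = rank Ls j"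
  shows "Ls ! i \<le> 3 ^ i * Ls ! j"
proof -
  define S where "S t = sum_list (take (Suc t) Ls)" for t
  have stp: "Ls ! Suc t \<le> 2 * S t" if "j \<le> t" "t < i" for t
  proof -
    have "rank Ls j \<le> rank Ls t" using that rank_mono' by blast
    moreover have "rank Ls (Suc t) \<le> rank Ls i" using that rank_mono'[of "Suc t" i Ls] by simp
    moreover have "rank Ls t \<le> rank Ls (Suc t)" using rank_mono' by simp
    ultimately have "rank Ls (Suc t) = rank Ls t" using rk by linarith
    then show ?thesis unfolding S_def by (auto split: if_splits)
  qed
  have geo: "t \<le> i \<longrightarrow> S t \<le> 3 ^ (t - j) * S j" if "j \<le> t" for t
    using that
  proof (induction t rule: dec_induct)
    case base then show ?case by simp
  next
    case (step t)
    show ?case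
    proof
      assume "Suc t \<le> i"
      have "S (Suc t) = S t + Ls ! Suc t" unfolding S_def by (rule S_Suc) (use il \<open>Suc t \<le> i\<close> in simp)
      also have "\<dots> \<le> 3 * S t" using stp[of t] \<open>Suc t \<le> i\<close> step.hyps by simp
      also have "\<dots> \<le> 3 * (3 ^ (t - j) * S j)" using step.IH \<open>Suc t \<le> i\<close> by simp
      also have "\<dots> = 3 ^ (Suc t - j) * S j" using step.hyps by (simp add: Suc_diff_le)
      finally show "S (Suc t) \<le> 3 ^ (Suc t - j) * S j" .
    qed
  qed
  have Sj: "k \<le> j \<longrightarrow> S k \<le> real (Suc k) * Ls ! j" for k
  proof (induction k)
    case 0
    have "take (Suc 0) Ls = [Ls ! 0]" using il by (cases Ls) auto
    then show ?case using srt il ji by (simp add: S_def sorted_nth_mono)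
  next
    case (Suc k)
    show ?case
    proof
      assume "Suc k \<le> j"
      have "S (Suc k) = S k + Ls ! Suc k" unfolding S_def by (rule S_Suc) (use il ji \<open>Suc k \<le> j\<close> in simp)
      moreover have "Ls ! Suc k \<le> Ls ! j" using srt il ji \<open>Suc k \<le> j\<close> by (simp add: sorted_nth_mono)
      ultimately show "S (Suc k) \<le> real (Suc (Suc k)) * Ls ! j" using Suc \<open>Suc k \<le> j\<close>
        by (simp add: algebra_simps)
    qed
  qed
  have LiS: "Ls ! i \<le> S i"
  proof -
    have "S i = sum_list (take i Ls) + Ls ! i" unfolding S_def using il
      by (simp add: take_Suc_conv_app_nth)
    moreover have "0 \<le> sum_list (take i Ls)" using nn
      by (intro sum_list_nonneg) (meson in_set_takeD)
    ultimately show ?thesis by simp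
  qed
  have Lj0: "0 \<le> Ls ! j" using nn il ji by auto
  have "Ls ! i \<le> 3 ^ (i - j) * S j" using LiS geo[OF ji] by simp
  also have "\<dots> \<le> 3 ^ (i - j) * (real (Suc j) * Ls ! j)" using Sj by simp
  also have "\<dots> \<le> 3 ^ (i - j) * (3 ^ j * Ls ! j)"
  proof -
    have "real (Suc j) \<le> 3 ^ j" using suc_le_pow3[of j] by (metis of_nat_le_iff of_nat_numeral of_nat_power)
    then show ?thesis using Lj0 by (intro mult_left_mono mult_right_mono) auto
  qed
  also have "\<dots> = 3 ^ i * Ls ! j" using ji by (simp add: power_add[symmetric])
  finally show ?thesis .
qed

lemma card_bound:
  assumes tree: "is_rooted_tree V E r"
  shows "card E \<le> card V - 1"
proof -
  have fin: "finite V" "r \<in> V" "E \<subseteq> V \<times> V" "\<forall>u. (u, r) \<notin> E"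
    "\<forall>v\<in>V - {r}. \<exists>!u. (u, v) \<in> E" using tree unfolding is_rooted_tree_def by auto
  have inj: "inj_on snd E"
  proof (rule inj_onI)
    fix x y assume xy: "x \<in> E" "y \<in> E" "snd x = snd y"
    obtain a b where x: "x = (a, b)" by force
    obtain c d where y: "y = (c, d)" by force
    have "b \<in> V - {r}" using xy x fin by auto
    then have "a = c" using fin(5) xy x y by auto
    then show "x = y" using x y xy by simp
  qed
  have sub: "snd ` E \<subseteq> V - {r}" using fin by force
  have "card E = card (snd ` E)" using inj by (simp add: card_image)
  also have "\<dots> \<le> card (V - {r})" using sub fin by (intro card_mono) auto
  also have "\<dots> = card V - 1" using fin by simp
  finally show ?thesis .
qed

theorem claim3:
  fixes V :: "'a::metric_space set" and E :: "('a \<times> 'a) set" and r :: 'a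
    and es :: "('a \<times> 'a) list"
  assumes tree: "is_rooted_tree V E r"
    and enum: "distinct es" "set es = E"
    and sorted: "sorted (map edge_len es)"
    and i: "i < length es" and j: "j < length es"
    and same_rank: "rank (map edge_len es) i = rank (map edge_len es) j"
  shows "edge_len (es ! i) / edge_len (es ! j) \<le> 3 ^ (card V - 1)"
proof -
  define Ls where "Ls = map edge_len es"
  have nn: "\<forall>x\<in>set Ls. 0 \<le> x" unfolding Ls_def edge_len_def by auto
  have len: "length es \<le> card V - 1"
    using card_bound[OF tree] enum distinct_card by metis
  have Lj0: "0 \<le> edge_len (es ! j)" unfolding edge_len_def by simp
  show ?thesis
  proof (cases "i \<le> j")
    case True
    have "edge_len (es ! i) \<le> edge_len (es ! j)"
      using sorted_nth_mono[OF sorted True] j i by simp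
    then have "edge_len (es ! i) / edge_len (es ! j) \<le> 1"
      using Lj0 by (cases "edge_len (es ! j) = 0") (auto simp: divide_le_eq)
    also have "(1::real) \<le> 3 ^ (card V - 1)" by simp
    finally show ?thesis .
  next
    case False
    have "Ls ! i \<le> 3 ^ i * Ls ! j"
      using key[of Ls j i] sorted nn False i same_rank unfolding Ls_def by simp
    then have k: "edge_len (es ! i) \<le> 3 ^ i * edge_len (es ! j)" using i j by (simp add: Ls_def)
    have "(3::real) ^ i \<le> 3 ^ (card V - 1)" using i len by (intro power_increasing) auto
    then have "edge_len (es ! i) \<le> 3 ^ (card V - 1) * edge_len (es ! j)"
      using k Lj0 by (meson mult_right_mono order_trans)
    then show ?thesis using Lj0
      by (cases "edge_len (es ! j) = 0") (auto simp: divide_le_eq)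
  qed
qed

end
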